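(* Let $R$ be a ring, let $(X_*,d)$ be a chain complex of left $R$-modules with decompositions $X_n=\bigoplus_{i\in I_n}X_{n,i}$, let $Q$ be its weighted quiver, and let $\mathcal M$ be a partial matching of $Q$. Suppose that for each vertex $(n,i)$ of $Q^{\mathcal M}$, every zigzag path in $Q^{\mathcal M}$ starting at $(n,i)$ has finite length; that is, there is no infinite zigzag path. Then $\mathcal M$ is a Morse matching.
   Context: Write $d_{n,ji}:X_{n,i}\to X_{n-1,j}$ ($i\in I_n$, $j\in I_{n-1}$) for the components of $d_n$. The weighted quiver $Q$ has vertices the pairs $(n,i)$ with $n\in\mathbb Z$, $i\in I_n$. For each pair with $d_{n,ji}\neq0$ it has one arrow $(n,i)\to(n-1,j)$, of weight $d_{n,ji}$. A partial matching is a set $\mathcal M$ of arrows of $Q$ such that - every vertex is incident to at most one arrow of $\mathcal M$, and - the weight of each arrow of $\mathcal M$ is an isomorphism of modules. The quiver $Q^{\mathcal M}$ is obtained from $Q$ as follows: - each arrow not in $\mathcal M$ is kept, with its weight, and called thick; - each arrow $(n,i)\to(n-1,j)$ in $\mathcal M$ is replaced by a dotted arrow $(n-1,j)\to(n,i)$ of weight $-d_{n,ji}^{-1}$. A zigzag path is a path in $Q^{\mathcal M}$ whose arrows alternate between dotted and thick. For a finite path $p$, $\varphi^{\mathcal M}_p$ denotes the composition of the weights of its arrows, in the order of the path. Let $\mathcal V_n=\{(n,i):i\in I_n\}$ and let $\mathcal D_n\subseteq\mathcal V_n$ be the set of targets of arrows of $\mathcal M$ in $Q$. For $(n,i)\in\mathcal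 D_n$ and $(n,j)\in\mathcal V_n$, let $\mathrm{Path}_1^{\mathcal M}((n,i),(n,j))$ be the set of zigzag paths from $(n,i)$ to $(n,j)$ beginning with a dotted arrow. A Morse matching is a partial matching satisfying the following local finiteness hypothesis. For every $(n,i)\in\mathcal D_n$ and every $x\in X_{n,i}$: - for every $(n,j)\in\mathcal V_n$ the sum $\sum_{p\in\mathrm{Path}_1^{\mathcal M}((n,i),(n,j))}\varphi^{\mathcal M}_p(x)$ exists (for instance, it is a finite sum); - only finitely many $(n,j)\in\mathcal V_n$ have this sum nonzero. *)

theory Defs
  imports Main
begin

text \<open>All modules X_{n,i} live as subsets of one ambient abelian group 'm,
  with a (left) scalar action smul of the ring 'r.\<close>

definition left_module_on :: "('r::ring_1 \<Rightarrow> 'm::ab_group_add \<Rightarrow> 'm) \<Rightarrow> 'm set \<Rightarrow> bool" where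
  "left_module_on smul M \<longleftrightarrow>
     0 \<in> M \<and> (\<forall>x\<in>M. \<forall>y\<in>M. x + y \<in> M) \<and> (\<forall>x\<in>M. - x \<in> M) \<and>
     (\<forall>r. \<forall>x\<in>M. smul r x \<in> M) \<and>
     (\<forall>r. \<forall>x\<in>M. \<forall>y\<in>M. smul r (x + y) = smul r x + smul r y) \<and>
     (\<forall>r s. \<forall>x\<in>M. smul (r + s) x = smul r x + smul s x) \<and>
     (\<forall>r s. \<forall>x\<in>M. smul (r * s) x = smul r (smul s x)) \<and>
     (\<forall>x\<in>M. smul 1 x = x)"

definition linear_on :: "('r::ring_1 \<Rightarrow> 'm::ab_group_add \<Rightarrow> 'm) \<Rightarrow> 'm set \<Rightarrow> 'm set \<Rightarrow> ('m \<Rightarrow> 'm) \<Rightarrow> bool" where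
  "linear_on smul A B f \<longleftrightarrow>
     f ` A \<subseteq> B \<and> (\<forall>x\<in>A. \<forall>y\<in>A. f (x + y) = f x + f y) \<and>
     (\<forall>r. \<forall>x\<in>A. f (smul r x) = smul r (f x))"

definition module_iso_on :: "('r::ring_1 \<Rightarrow> 'm::ab_group_add \<Rightarrow> 'm) \<Rightarrow> 'm set \<Rightarrow> 'm set \<Rightarrow> ('m \<Rightarrow> 'm) \<Rightarrow> bool" where
  "module_iso_on smul A B f \<longleftrightarrow> linear_on smul A B f \<and> bij_betw f A B"

text \<open>Index sets I n (the I_n), components X n i (the X_{n,i}, for i in I n) and
  components d n j i : X n i \<rightarrow> X (n-1) j of the differential d_n.
  The differential d_n : \<Oplus>_i X_{n,i} \<rightarrow> \<Oplus>_j X_{n-1,j} is well defined iff every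
  generator component has finitely many nonzero images; d\<circ>d = 0 is stated on components.\<close>

definition decomposed_chain_complex ::
  "('r::ring_1 \<Rightarrow> 'm::ab_group_add \<Rightarrow> 'm) \<Rightarrow> (int \<Rightarrow> 'i set) \<Rightarrow> (int \<Rightarrow> 'i \<Rightarrow> 'm set)
    \<Rightarrow> (int \<Rightarrow> 'i \<Rightarrow> 'i \<Rightarrow> 'm \<Rightarrow> 'm) \<Rightarrow> bool" where
  "decomposed_chain_complex smul I X d \<longleftrightarrow>
     (\<forall>n. \<forall>i\<in>I n. left_module_on smul (X n i)) \<and>
     (\<forall>n. \<forall>i\<in>I n. \<forall>j\<in>I (n - 1). linear_on smul (X n i) (X (n - 1) j) (d n j i)) \<and>
     (\<forall>n. \<forall>i\<in>I n. \<forall>x\<in>X n i. finite {j \<in> I (n - 1). d n j i x \<noteq> 0}) \<and>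
     (\<forall>n. \<forall>i\<in>I n. \<forall>x\<in>X n i. \<forall>k\<in>I (n - 2).
        (\<Sum>j\<in>{j \<in> I (n - 1). d n j i x \<noteq> 0}. d (n - 1) k j (d n j i x)) = 0)"

text \<open>An arrow of Q is encoded by the triple (n, i, j): the arrow (n,i) \<rightarrow> (n-1,j) of weight d n j i.
  It exists iff i \<in> I n, j \<in> I (n-1) and d n j i is not the zero map on X n i.\<close>

definition Q_arrow :: "(int \<Rightarrow> 'i set) \<Rightarrow> (int \<Rightarrow> 'i \<Rightarrow> 'm::zero set)
    \<Rightarrow> (int \<Rightarrow> 'i \<Rightarrow> 'i \<Rightarrow> 'm \<Rightarrow> 'm) \<Rightarrow> int \<times> 'i \<times> 'i \<Rightarrow> bool" where
  "Q_arrow I X d a \<longleftrightarrow> (case a of (n, i, j) \<Rightarrow>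
      i \<in> I n \<and> j \<in> I (n - 1) \<and> (\<exists>x\<in>X n i. d n j i x \<noteq> 0))"

fun arrow_src :: "int \<times> 'i \<times> 'i \<Rightarrow> int \<times> 'i" where
  "arrow_src (n, i, j) = (n, i)"

fun arrow_tgt :: "int \<times> 'i \<times> 'i \<Rightarrow> int \<times> 'i" where
  "arrow_tgt (n, i, j) = (n - 1, j)"

definition partial_matching ::
  "('r::ring_1 \<Rightarrow> 'm::ab_group_add \<Rightarrow> 'm) \<Rightarrow> (int \<Rightarrow> 'i set) \<Rightarrow> (int \<Rightarrow> 'i \<Rightarrow> 'm set)
    \<Rightarrow> (int \<Rightarrow> 'i \<Rightarrow> 'i \<Rightarrow> 'm \<Rightarrow> 'm) \<Rightarrow> (int \<times> 'i \<times> 'i) set \<Rightarrow> bool" where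
  "partial_matching smul I X d M \<longleftrightarrow>
     (\<forall>a\<in>M. Q_arrow I X d a) \<and>
     (\<forall>a\<in>M. \<forall>b\<in>M. {arrow_src a, arrow_tgt a} \<inter> {arrow_src b, arrow_tgt b} \<noteq> {} \<longrightarrow> a = b) \<and>
     (\<forall>(n, i, j)\<in>M. module_iso_on smul (X n i) (X (n - 1) j) (d n j i))"

text \<open>Arrows of Q^M: Thick n i j is the kept arrow (n,i) \<rightarrow> (n-1,j) (not in M);
  Dotted n i j is the reversed arrow (n-1,j) \<rightarrow> (n,i) for (n,i,j) \<in> M.\<close>

datatype 'i qm_arrow = Thick int 'i 'i | Dotted int 'i 'i

definition QM_arrow :: "(int \<Rightarrow> 'i set) \<Rightarrow> (int \<Rightarrow> 'i \<Rightarrow> 'm::zero set)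
    \<Rightarrow> (int \<Rightarrow> 'i \<Rightarrow> 'i \<Rightarrow> 'm \<Rightarrow> 'm) \<Rightarrow> (int \<times> 'i \<times> 'i) set \<Rightarrow> 'i qm_arrow \<Rightarrow> bool" where
  "QM_arrow I X d M e \<longleftrightarrow> (case e of
      Thick n i j \<Rightarrow> Q_arrow I X d (n, i, j) \<and> (n, i, j) \<notin> M
    | Dotted n i j \<Rightarrow> (n, i, j) \<in> M)"

fun qm_src :: "'i qm_arrow \<Rightarrow> int \<times> 'i" where
  "qm_src (Thick n i j) = (n, i)"
| "qm_src (Dotted n i j) = (n - 1, j)"

fun qm_tgt :: "'i qm_arrow \<Rightarrow> int \<times> 'i" where
  "qm_tgt (Thick n i j) = (n - 1, j)"
| "qm_tgt (Dotted n i j) = (n, i)"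

fun is_dotted :: "'i qm_arrow \<Rightarrow> bool" where
  "is_dotted (Thick n i j) = False"
| "is_dotted (Dotted n i j) = True"

fun qm_weight :: "(int \<Rightarrow> 'i \<Rightarrow> 'm::ab_group_add set) \<Rightarrow> (int \<Rightarrow> 'i \<Rightarrow> 'i \<Rightarrow> 'm \<Rightarrow> 'm)
    \<Rightarrow> 'i qm_arrow \<Rightarrow> 'm \<Rightarrow> 'm" where
  "qm_weight X d (Thick n i j) = d n j i"
| "qm_weight X d (Dotted n i j) = (\<lambda>y. - the_inv_into (X n i) (d n j i) y)"

fun path_weight :: "(int \<Rightarrow> 'i \<Rightarrow> 'm::ab_group_add set) \<Rightarrow> (int \<Rightarrow> 'i \<Rightarrow> 'i \<Rightarrow> 'm \<Rightarrow> 'm)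
    \<Rightarrow> 'i qm_arrow list \<Rightarrow> 'm \<Rightarrow> 'm" where
  "path_weight X d [] x = x"
| "path_weight X d (e # es) x = path_weight X d es (qm_weight X d e x)"

definition zigzag_path :: "(int \<Rightarrow> 'i set) \<Rightarrow> (int \<Rightarrow> 'i \<Rightarrow> 'm::zero set)
    \<Rightarrow> (int \<Rightarrow> 'i \<Rightarrow> 'i \<Rightarrow> 'm \<Rightarrow> 'm) \<Rightarrow> (int \<times> 'i \<times> 'i) set \<Rightarrow> 'i qm_arrow list \<Rightarrow> bool" where
  "zigzag_path I X d M p \<longleftrightarrow>
     (\<forall>e\<in>set p. QM_arrow I X d M e) \<and>
     (\<forall>k. Suc k < length p \<longrightarrow> qm_tgt (p ! k) = qm_src (p ! Suc k) \<and>
                                  is_dotted (p ! k) \<noteq> is_dotted (p ! Suc k))"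

definition infinite_zigzag_path :: "(int \<Rightarrow> 'i set) \<Rightarrow> (int \<Rightarrow> 'i \<Rightarrow> 'm::zero set)
    \<Rightarrow> (int \<Rightarrow> 'i \<Rightarrow> 'i \<Rightarrow> 'm \<Rightarrow> 'm) \<Rightarrow> (int \<times> 'i \<times> 'i) set \<Rightarrow> (nat \<Rightarrow> 'i qm_arrow) \<Rightarrow> bool" where
  "infinite_zigzag_path I X d M f \<longleftrightarrow>
     (\<forall>k. QM_arrow I X d M (f k) \<and> qm_tgt (f k) = qm_src (f (Suc k)) \<and>
          is_dotted (f k) \<noteq> is_dotted (f (Suc k)))"

definition Path1 :: "(int \<Rightarrow> 'i set) \<Rightarrow> (int \<Rightarrow> 'i \<Rightarrow> 'm::zero set)
    \<Rightarrow> (int \<Rightarrow> 'i \<Rightarrow> 'i \<Rightarrow> 'm \<Rightarrow> 'm) \<Rightarrow> (int \<times> 'i \<times> 'i) set \<Rightarrow> int \<times> 'i \<Rightarrow> int \<times> 'i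
    \<Rightarrow> 'i qm_arrow list set" where
  "Path1 I X d M u v = {p. zigzag_path I X d M p \<and> p \<noteq> [] \<and> is_dotted (hd p) \<and>
                          qm_src (hd p) = u \<and> qm_tgt (last p) = v}"

definition D_set :: "(int \<times> 'i \<times> 'i) set \<Rightarrow> int \<Rightarrow> 'i set" where
  "D_set M n = {i. \<exists>k. (n + 1, k, i) \<in> M}"

text \<open>Morse matching. In a module without topology the sum over Path_1 "exists" when only
  finitely many of its terms are nonzero; its value is then the finite sum of those terms.\<close>

definition path_sum :: "(int \<Rightarrow> 'i set) \<Rightarrow> (int \<Rightarrow> 'i \<Rightarrow> 'm::ab_group_add set)
    \<Rightarrow> (int \<Rightarrow> 'i \<Rightarrow> 'i \<Rightarrow> 'm \<Rightarrow> 'm) \<Rightarrow> (int \<times> 'i \<times> 'i) set \<Rightarrow> int \<times> 'i \<Rightarrow> int \<times> 'i \<Rightarrow> 'm \<Rightarrow> 'm" where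
  "path_sum I X d M u v x =
     (\<Sum>p\<in>{p \<in> Path1 I X d M u v. path_weight X d p x \<noteq> 0}. path_weight X d p x)"

definition morse_matching ::
  "('r::ring_1 \<Rightarrow> 'm::ab_group_add \<Rightarrow> 'm) \<Rightarrow> (int \<Rightarrow> 'i set) \<Rightarrow> (int \<Rightarrow> 'i \<Rightarrow> 'm set)
    \<Rightarrow> (int \<Rightarrow> 'i \<Rightarrow> 'i \<Rightarrow> 'm \<Rightarrow> 'm) \<Rightarrow> (int \<times> 'i \<times> 'i) set \<Rightarrow> bool" where
  "morse_matching smul I X d M \<longleftrightarrow>
     partial_matching smul I X d M \<and>
     (\<forall>n. \<forall>i\<in>D_set M n. \<forall>x\<in>X n i.
        (\<forall>j\<in>I n. finite {p \<in> Path1 I X d M (n, i) (n, j). path_weight X d p x \<noteq> 0}) \<and>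
        finite {j \<in> I n. path_sum I X d M (n, i) (n, j) x \<noteq> 0})"

end

theory Submission
  imports Defs
begin

lemma qm_weight_mem:
  assumes cc: "decomposed_chain_complex smul I X d" and pm: "partial_matching smul I X d M"
    and e: "QM_arrow I X d M e" and y: "y \<in> case_prod X (qm_src e)"
  shows "qm_weight X d e y \<in> case_prod X (qm_tgt e)"
proof (cases e)
  case (Thick n i j)
  then have q: "i \<in> I n" "j \<in> I (n - 1)" using e by (auto simp: QM_arrow_def Q_arrow_def)
  then have "linear_on smul (X n i) (X (n - 1) j) (d n j i)" using cc
    by (auto simp: decomposed_chain_complex_def)
  then show ?thesis using Thick y by (auto simp: linear_on_def)
next
  case (Dotted n i j)
  then have m: "(n, i, j) \<in> M" using e by (auto simp: QM_arrow_def)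
  then have q: "i \<in> I n" "j \<in> I (n - 1)" using pm by (auto simp: partial_matching_def Q_arrow_def)
  have b: "bij_betw (d n j i) (X n i) (X (n - 1) j)" using pm m
    by (auto simp: partial_matching_def module_iso_on_def)
  have "the_inv_into (X n i) (d n j i) y \<in> X n i"
    apply (rule the_inv_into_into)
    using b y Dotted by (auto simp: bij_betw_def)
  moreover have "left_module_on smul (X n i)" using cc q by (auto simp: decomposed_chain_complex_def)
  ultimately show ?thesis using Dotted by (auto simp: left_module_on_def)
qed

lemma qm_weight_zero:
  assumes cc: "decomposed_chain_complex smul I X d" and pm: "partial_matching smul I X d M"
    and e: "QM_arrow I X d M e"
  shows "qm_weight X d e 0 = 0"
proof (cases e)
  case (Thick n i j)
  then have q: "i \<in> I n" "j \<in> I (n - 1)" using e by (auto simp: QM_arrow_def Q_arrow_def)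
  then have l: "linear_on smul (X n i) (X (n - 1) j) (d n j i)" using cc
    by (auto simp: decomposed_chain_complex_def)
  have "0 \<in> X n i" using cc q by (auto simp: decomposed_chain_complex_def left_module_on_def)
  then have "d n j i (0 + 0) = d n j i 0 + d n j i 0" using l unfolding linear_on_def by blast
  then show ?thesis using Thick by simp
next
  case (Dotted n i j)
  then have m: "(n, i, j) \<in> M" using e by (auto simp: QM_arrow_def)
  then have q: "i \<in> I n" "j \<in> I (n - 1)" using pm by (auto simp: partial_matching_def Q_arrow_def)
  have b: "bij_betw (d n j i) (X n i) (X (n - 1) j)" and l: "linear_on smul (X n i) (X (n - 1) j) (d n j i)"
    using pm m by (auto simp: partial_matching_def module_iso_on_def)
  have z: "0 \<in> X n i" using cc q by (auto simp: decomposed_chain_complex_def left_module_on_def)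
  then have "d n j i (0 + 0) = d n j i 0 + d n j i 0" using l unfolding linear_on_def by blast
  then have "d n j i 0 = 0" by simp
  then have "the_inv_into (X n i) (d n j i) 0 = 0"
    using b z by (auto simp: bij_betw_def intro: the_inv_into_f_eq)
  then show ?thesis using Dotted by simp
qed

lemma path_weight_zero:
  assumes cc: "decomposed_chain_complex smul I X d" and pm: "partial_matching smul I X d M"
    and "\<forall>e\<in>set ps. QM_arrow I X d M e"
  shows "path_weight X d ps 0 = 0"
  using assms(3)
proof (induction ps)
  case (Cons e ps)
  then show ?case using qm_weight_zero[OF cc pm, of e] by simp
qed simp

lemma zigzag_Cons:
  "zigzag_path I X d M (e # e' # ps) \<longleftrightarrow>
   QM_arrow I X d M e \<and> qm_tgt e = qm_src e' \<and> is_dotted e \<noteq> is_dotted e' \<and>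
   zigzag_path I X d M (e' # ps)"
proof
  assume a: "zigzag_path I X d M (e # e' # ps)"
  have A: "\<forall>k. Suc k < length (e' # ps) \<longrightarrow> qm_tgt ((e' # ps) ! k) = qm_src ((e' # ps) ! Suc k) \<and>
        is_dotted ((e' # ps) ! k) \<noteq> is_dotted ((e' # ps) ! Suc k)"
  proof (intro allI impI)
      fix k assume "Suc k < length (e' # ps)"
      then have "Suc (Suc k) < length (e # e' # ps)" by simp
      then have "qm_tgt ((e # e' # ps) ! Suc k) = qm_src ((e # e' # ps) ! Suc (Suc k)) \<and>
        is_dotted ((e # e' # ps) ! Suc k) \<noteq> is_dotted ((e # e' # ps) ! Suc (Suc k))"
        using a[unfolded zigzag_path_def] by blast
      then show "qm_tgt ((e' # ps) ! k) = qm_src ((e' # ps) ! Suc k) \<and>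
        is_dotted ((e' # ps) ! k) \<noteq> is_dotted ((e' # ps) ! Suc k)"
        by simp
  qed
  have "Suc 0 < length (e # e' # ps)" by simp
  then have B: "qm_tgt e = qm_src e' \<and> is_dotted e \<noteq> is_dotted e'"
      using a[unfolded zigzag_path_def] by (metis nth_Cons_0 nth_Cons_Suc)
  show "QM_arrow I X d M e \<and> qm_tgt e = qm_src e' \<and> is_dotted e \<noteq> is_dotted e' \<and>
   zigzag_path I X d M (e' # ps)"
    using A B a unfolding zigzag_path_def by simp
next
  assume a: "QM_arrow I X d M e \<and> qm_tgt e = qm_src e' \<and> is_dotted e \<noteq> is_dotted e' \<and>
   zigzag_path I X d M (e' # ps)"
  have A: "\<forall>k. Suc k < length (e # e' # ps) \<longrightarrow> qm_tgt ((e # e' # ps) ! k) = qm_src ((e # e' # ps) ! Suc k) \<and>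
        is_dotted ((e # e' # ps) ! k) \<noteq> is_dotted ((e # e' # ps) ! Suc k)"
  proof (intro allI impI)
    fix k assume k: "Suc k < length (e # e' # ps)"
    show "qm_tgt ((e # e' # ps) ! k) = qm_src ((e # e' # ps) ! Suc k) \<and>
        is_dotted ((e # e' # ps) ! k) \<noteq> is_dotted ((e # e' # ps) ! Suc k)"
    proof (cases k)
      case 0 then show ?thesis using a by simp
    next
      case (Suc k')
      then have "Suc k' < length (e' # ps)" using k by simp
      then have "qm_tgt ((e' # ps) ! k') = qm_src ((e' # ps) ! Suc k') \<and>
        is_dotted ((e' # ps) ! k') \<noteq> is_dotted ((e' # ps) ! Suc k')"
        using a unfolding zigzag_path_def by blast
      then show ?thesis using Suc by simp
    qed
  qed
  show "zigzag_path I X d M (e # e' # ps)" using A a unfolding zigzag_path_def by simp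
qed

lemma match_unique:
  assumes pm: "partial_matching smul I X d M" and "(a, b, c) \<in> M" and "(a, b', c) \<in> M"
  shows "b = b'"
proof -
  have "{arrow_src (a, b, c), arrow_tgt (a, b, c)} \<inter> {arrow_src (a, b', c), arrow_tgt (a, b', c)} \<noteq> {}"
    by simp
  then show ?thesis using pm assms(2,3) unfolding partial_matching_def by blast
qed

lemma tgt_in_I:
  assumes pm: "partial_matching smul I X d M" and e: "QM_arrow I X d M e"
  shows "snd (qm_tgt e) \<in> I (fst (qm_tgt e))"
proof (cases e)
  case (Thick n i j) then show ?thesis using e by (auto simp: QM_arrow_def Q_arrow_def)
next
  case (Dotted n i j) then show ?thesis using e pm by (auto simp: QM_arrow_def Q_arrow_def partial_matching_def)
qed

theorem proposition3p2:
  fixes smul :: "'r::ring_1 \<Rightarrow> 'm::ab_group_add \<Rightarrow> 'm"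
    and I :: "int \<Rightarrow> 'i set"
    and X :: "int \<Rightarrow> 'i \<Rightarrow> 'm set"
    and d :: "int \<Rightarrow> 'i \<Rightarrow> 'i \<Rightarrow> 'm \<Rightarrow> 'm"
    and M :: "(int \<times> 'i \<times> 'i) set"
  assumes "decomposed_chain_complex smul I X d"
    and "partial_matching smul I X d M"
    and "\<not> (\<exists>f. infinite_zigzag_path I X d M f)"
  shows "morse_matching smul I X d M"
proof -
  note cc = assms(1) and pm = assms(2)
  define R :: "(('i qm_arrow \<times> 'm) \<times> ('i qm_arrow \<times> 'm)) set" where
    "R = {(s', s). QM_arrow I X d M (fst s) \<and> snd s \<in> case_prod X (qm_tgt (fst s)) \<and>
       QM_arrow I X d M (fst s') \<and> qm_tgt (fst s) = qm_src (fst s') \<and>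
       is_dotted (fst s) \<noteq> is_dotted (fst s') \<and> snd s' = qm_weight X d (fst s') (snd s) \<and> snd s' \<noteq> 0}"
  have wfR: "wf R"
  proof (rule ccontr)
    assume "\<not> wf R"
    then obtain f where f: "\<forall>k. (f (Suc k), f k) \<in> R" unfolding wf_iff_no_infinite_down_chain by blast
    have "infinite_zigzag_path I X d M (\<lambda>k. fst (f k))"
      unfolding infinite_zigzag_path_def
    proof
      fix k
      show "QM_arrow I X d M (fst (f k)) \<and> qm_tgt (fst (f k)) = qm_src (fst (f (Suc k))) \<and>
          is_dotted (fst (f k)) \<noteq> is_dotted (fst (f (Suc k)))"
        using f[rule_format, of k] unfolding R_def by auto
    qed
    then show False using assms(3) by blast
  qed
  have fin_succ: "finite {s'. (s', s) \<in> R}"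
    if s1: "QM_arrow I X d M (fst s)" and s2: "snd s \<in> case_prod X (qm_tgt (fst s))" for s
  proof -
    obtain m k where mk: "qm_tgt (fst s) = (m, k)" by fastforce
    define y where "y = snd s"
    have kI: "k \<in> I m" using tgt_in_I[OF pm s1] mk by simp
    have yX: "y \<in> X m k" using s2 mk y_def by simp
    have f1: "finite {j \<in> I (m - 1). d m j k y \<noteq> 0}"
      using cc kI yX unfolding decomposed_chain_complex_def by blast
    have f2: "finite {k'. (m + 1, k', k) \<in> M}"
    proof (cases "{k'. (m + 1, k', k) \<in> M} = {}")
      case False
      then obtain k0 where k0: "(m + 1, k0, k) \<in> M" by blast
      have "{k'. (m + 1, k', k) \<in> M} \<subseteq> {k0}" using match_unique[OF pm _ k0] by blast
      then show ?thesis using finite_subset by blast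
    qed simp
    have "{s'. (s', s) \<in> R} \<subseteq> (\<lambda>j. (Thick m k j, d m j k y)) ` {j \<in> I (m - 1). d m j k y \<noteq> 0} \<union>
        (\<lambda>k'. (Dotted (m + 1) k' k, qm_weight X d (Dotted (m + 1) k' k) y)) ` {k'. (m + 1, k', k) \<in> M}"
    proof
      fix s' assume "s' \<in> {s'. (s', s) \<in> R}"
      then have r: "(s', s) \<in> R" by simp
      obtain e' y' where s': "s' = (e', y')" by fastforce
      show "s' \<in> (\<lambda>j. (Thick m k j, d m j k y)) ` {j \<in> I (m - 1). d m j k y \<noteq> 0} \<union>
        (\<lambda>k'. (Dotted (m + 1) k' k, qm_weight X d (Dotted (m + 1) k' k) y)) ` {k'. (m + 1, k', k) \<in> M}"
      proof (cases e')
        case (Thick a b c)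
        then show ?thesis using r s' mk unfolding R_def y_def
          by (auto simp: QM_arrow_def Q_arrow_def)
      next
        case (Dotted a b c)
        then show ?thesis using r s' mk unfolding R_def y_def
          by (auto simp: QM_arrow_def Q_arrow_def)
      qed
    qed
    then show ?thesis using f1 f2 finite_subset by blast
  qed
  define L where "L s = {ps. zigzag_path I X d M (fst s # ps) \<and> path_weight X d ps (snd s) \<noteq> 0}" for s
  have finL: "\<forall>s. QM_arrow I X d M (fst s) \<and> snd s \<in> case_prod X (qm_tgt (fst s)) \<longrightarrow> finite (L s)"
  proof (intro allI)
    fix s
    show "QM_arrow I X d M (fst s) \<and> snd s \<in> case_prod X (qm_tgt (fst s)) \<longrightarrow> finite (L s)"
    proof (induction s rule: wf_induct[OF wfR])
      case (1 s)
      show ?case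
      proof
        assume s: "QM_arrow I X d M (fst s) \<and> snd s \<in> case_prod X (qm_tgt (fst s))"
        have sub: "L s \<subseteq> {[]} \<union> (\<Union>s'\<in>{s'. (s', s) \<in> R}. (Cons (fst s')) ` L s')"
        proof
          fix ps assume ps: "ps \<in> L s"
          show "ps \<in> {[]} \<union> (\<Union>s'\<in>{s'. (s', s) \<in> R}. (Cons (fst s')) ` L s')"
          proof (cases ps)
            case (Cons e' ps')
            define y' where "y' = qm_weight X d e' (snd s)"
            have z: "zigzag_path I X d M (e' # ps')" "QM_arrow I X d M (fst s)"
              "qm_tgt (fst s) = qm_src e'" "is_dotted (fst s) \<noteq> is_dotted e'"
              using ps Cons zigzag_Cons[of I X d M "fst s" e' ps'] unfolding L_def by auto
            have pw: "path_weight X d ps' y' \<noteq> 0" using ps Cons unfolding L_def y'_def by simp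
            have "\<forall>e\<in>set ps'. QM_arrow I X d M e" using z(1) unfolding zigzag_path_def by simp
            then have "y' \<noteq> 0" using pw path_weight_zero[OF cc pm] by metis
            moreover have "QM_arrow I X d M e'" using z(1) unfolding zigzag_path_def by simp
            ultimately have r: "((e', y'), s) \<in> R" using s z unfolding R_def y'_def by auto
            have "ps' \<in> L (e', y')" using z(1) pw unfolding L_def by simp
            then show ?thesis using r Cons by force
          qed simp
        qed
        have "finite (L s')" if "s' \<in> {s'. (s', s) \<in> R}" for s'
        proof -
          have r: "(s', s) \<in> R" using that by simp
          have a1: "snd s' \<in> case_prod X (qm_tgt (fst s'))"
            using r qm_weight_mem[OF cc pm, of "fst s'" "snd s"] unfolding R_def by auto
          have a2: "QM_arrow I X d M (fst s')" using r unfolding R_def by auto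
          have "QM_arrow I X d M (fst s') \<and> snd s' \<in> case_prod X (qm_tgt (fst s')) \<longrightarrow> finite (L s')"
            using mp[OF spec[OF 1, of s'] r] .
          then show ?thesis using a1 a2 by blast
        qed
        then have "finite (\<Union>s'\<in>{s'. (s', s) \<in> R}. (Cons (fst s')) ` L s')"
          using fin_succ s by auto
        then show "finite (L s)" using sub finite_subset by blast
      qed
    qed
  qed
  have main: "finite {p. \<exists>v. p \<in> Path1 I X d M (n, i) v \<and> path_weight X d p x \<noteq> 0}"
    if i: "i \<in> D_set M n" and x: "x \<in> X n i" for n i x
  proof -
    obtain k where k: "(n + 1, k, i) \<in> M" using i unfolding D_set_def by blast
    define e0 where "e0 = Dotted (n + 1) k i"
    define y0 where "y0 = qm_weight X d e0 x"
    have e0: "QM_arrow I X d M e0" using k unfolding e0_def QM_arrow_def by simp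
    have y0: "y0 \<in> case_prod X (qm_tgt e0)"
      using qm_weight_mem[OF cc pm e0, of x] x unfolding y0_def e0_def by simp
    have "{p. \<exists>v. p \<in> Path1 I X d M (n, i) v \<and> path_weight X d p x \<noteq> 0} \<subseteq> Cons e0 ` L (e0, y0)"
    proof
      fix p assume "p \<in> {p. \<exists>v. p \<in> Path1 I X d M (n, i) v \<and> path_weight X d p x \<noteq> 0}"
      then obtain v where p: "p \<in> Path1 I X d M (n, i) v" and w: "path_weight X d p x \<noteq> 0" by blast
      then obtain e ps where ep: "p = e # ps" unfolding Path1_def by (cases p) auto
      have z: "zigzag_path I X d M (e # ps)" "is_dotted e" "qm_src e = (n, i)"
        using p ep unfolding Path1_def by auto
      have "QM_arrow I X d M e" using z(1) unfolding zigzag_path_def by simp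
      then have "e = e0" using z(2,3) match_unique[OF pm k] unfolding e0_def
        by (cases e) (auto simp: QM_arrow_def)
      then show "p \<in> Cons e0 ` L (e0, y0)" using z w ep unfolding L_def y0_def by auto
    qed
    moreover have "finite (L (e0, y0))" using finL e0 y0 by auto
    ultimately show ?thesis using finite_subset by blast
  qed
  show ?thesis unfolding morse_matching_def
  proof (intro conjI pm allI ballI)
    fix n i x j assume i: "i \<in> D_set M n" and x: "x \<in> X n i"
    show "finite {p \<in> Path1 I X d M (n, i) (n, j). path_weight X d p x \<noteq> 0}"
      using main[OF i x] by (rule finite_subset[rotated]) blast
  next
    fix n i x assume i: "i \<in> D_set M n" and x: "x \<in> X n i"
    let ?A = "{p. \<exists>v. p \<in> Path1 I X d M (n, i) v \<and> path_weight X d p x \<noteq> 0}"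
    have "{j \<in> I n. path_sum I X d M (n, i) (n, j) x \<noteq> 0} \<subseteq> (\<lambda>p. snd (qm_tgt (last p))) ` ?A"
    proof
      fix j assume "j \<in> {j \<in> I n. path_sum I X d M (n, i) (n, j) x \<noteq> 0}"
      then have "path_sum I X d M (n, i) (n, j) x \<noteq> 0" by simp
      then have "{p \<in> Path1 I X d M (n, i) (n, j). path_weight X d p x \<noteq> 0} \<noteq> {}"
        unfolding path_sum_def by (metis sum.empty)
      then obtain p where "p \<in> Path1 I X d M (n, i) (n, j)" "path_weight X d p x \<noteq> 0"
        by blast
      moreover then have "qm_tgt (last p) = (n, j)" unfolding Path1_def by simp
      ultimately show "j \<in> (\<lambda>p. snd (qm_tgt (last p))) ` ?A" by force
    qed
    then show "finite {j \<in> I n. path_sum I X d M (n, i) (n, j) x \<noteq> 0}"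
      using main[OF i x] finite_subset by blast
  qed
qed

end
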